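(* Let $\hat\beta=\arg\min_{\beta\in[\beta_{\min},\beta_{\max}]}\frac1n\sum_{i=1}^n\|x_i-\beta\nabla u_{\theta_i}(x_i)\|^2$ and $\beta^*=\arg\min_{\beta\in[\beta_{\min},\beta_{\max}]}\mathbb E\|\tilde x-\beta\nabla u_{\tilde\theta}(\tilde x)\|^2$. Suppose $\mathbb E\|\nabla u_{\tilde\theta}(\tilde x)\|^2>0$ and that $\tilde x$ and $\nabla u_{\tilde\theta}(\tilde x)$ are subgaussian vectors. Then there are constants $C,C'>0$ (not depending on $n,\delta$) such that if $\frac{n}{\log n}\ge C(1+\log(1/\delta))$, then with probability $1-\delta$, $$|\hat\beta-\beta^*|\le C'\sqrt{\log n}\sqrt{\frac{1+\log(1/\delta)}{n}}.$$
   Context: $0<\beta_{\min}\le\beta_{\max}$; for each $\theta\in\Theta$, $u_\theta:\mathbb R^{d_x}\to\mathbb R$ is differentiable. $(\theta_i,x_i,y_i)$, $i\le n$, are i.i.d. copies of $(\tilde\theta,\tilde x,\tilde y)$ where $\tilde\theta\sim\tilde{\mathcal D}$ (an exploration distribution on $\Theta$) and $(\tilde x,\tilde y)\mid\tilde\theta\sim\mathcal D(\tilde\theta)$ for the true distribution map $\mathcal D$. A random variable $x$ is subgaussian with parameter $\sigma$ if $\mathbb P(|x|\ge t)\le2e^{-t^2/\sigma^2}$ for all $t\ge0$; a vector is subgaussian if every unit projection is. *)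

theory Defs
  imports "HOL-Analysis.Analysis" "HOL-Probability.Probability"
begin

definition grad :: "('a::real_inner \<Rightarrow> real) \<Rightarrow> 'a \<Rightarrow> 'a" where
  "grad f x = (THE D. GDERIV f x :> D)"

definition subgaussian_param :: "'a measure \<Rightarrow> ('a \<Rightarrow> real) \<Rightarrow> real \<Rightarrow> bool" where
  "subgaussian_param P f \<sigma> \<longleftrightarrow>
     (\<forall>t\<ge>0. measure P {z \<in> space P. \<bar>f z\<bar> \<ge> t} \<le> 2 * exp (- (t\<^sup>2 / \<sigma>\<^sup>2)))"

definition subgaussian_vec :: "'a measure \<Rightarrow> ('a \<Rightarrow> 'b::real_inner) \<Rightarrow> bool" where
  "subgaussian_vec P f \<longleftrightarrow>
     f \<in> borel_measurable P \<and>
     (\<exists>\<sigma>>0. \<forall>v. norm v = 1 \<longrightarrow> subgaussian_param P (\<lambda>z. v \<bullet> f z) \<sigma>)"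

end

theory Submission
  imports Defs
begin

lemma clip_argmin:
  fixes lo hi A B c :: real
  assumes "lo \<le> hi" "B > 0"
    and am: "is_arg_min (\<lambda>\<beta>. c - 2*\<beta>*A + \<beta>^2*B) (\<lambda>\<beta>. \<beta> \<in> {lo..hi}) b1"
  shows "b1 = max lo (min hi (A/B))"
proof (rule ccontr)
  assume ne: "b1 \<noteq> max lo (min hi (A/B))"
  define vv where "vv = A/B"
  define p where "p = max lo (min hi vv)"
  have A: "A = vv*B" using assms(2) by (simp add: vv_def)
  have pin: "p \<in> {lo..hi}" using assms(1) by (auto simp: p_def)
  have b1in: "b1 \<in> {lo..hi}" using am by (simp add: is_arg_min_def)
  have fe: "\<And>\<beta>. c - 2*\<beta>*A + \<beta>^2*B = (c - vv^2*B) + B*(\<beta> - vv)^2"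
    by (simp add: A power2_eq_square algebra_simps)
  have "(p - vv)^2 < (b1 - vv)^2"
  proof -
    have "\<bar>p - vv\<bar> < \<bar>b1 - vv\<bar>" using pin b1in ne unfolding p_def vv_def[symmetric]
      by (auto simp: max_def min_def split: if_splits)
    from power_strict_mono[OF this abs_ge_zero, of 2] show ?thesis by simp
  qed
  then have "B*(p - vv)^2 < B*(b1 - vv)^2" using assms(2) by simp
  then have "c - 2*p*A + p^2*B < c - 2*b1*A + b1^2*B" by (simp add: fe)
  with am pin show False by (auto simp: is_arg_min_def)
qed

lemma clip_lip:
  fixes lo hi v w :: real
  shows "\<bar>max lo (min hi v) - max lo (min hi w)\<bar> \<le> \<bar>v - w\<bar>"
  by (auto simp: max_def min_def)

lemma scalar_expmom:
  fixes P :: "'a measure" and f :: "'a \<Rightarrow> real"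
  assumes P: "prob_space P" and fm[measurable]: "f \<in> borel_measurable P" and s: "\<sigma> > 0"
    and tail: "\<And>t. t \<ge> 0 \<Longrightarrow> measure P {z\<in>space P. \<bar>f z\<bar> \<ge> t} \<le> 2*exp(-(t\<^sup>2/\<sigma>\<^sup>2))"
  shows "(\<integral>\<^sup>+z. ennreal (exp ((f z)\<^sup>2 / (2*\<sigma>\<^sup>2))) \<partial>P) < top"
proof -
  interpret prob_space P by fact
  define c where "c = 1/(2*\<sigma>\<^sup>2)"
  have c: "c > 0" using s by (simp add: c_def)
  define S where "S k = {z\<in>space P. real k \<le> c*(f z)\<^sup>2}" for k :: nat
  have Sm[measurable]: "S k \<in> sets P" for k unfolding S_def by measurable
  have e: "(f z)\<^sup>2/(2*\<sigma>\<^sup>2) = c*(f z)\<^sup>2" for z by (simp add: c_def)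
  have pt: "ennreal (exp ((f z)\<^sup>2/(2*\<sigma>\<^sup>2))) \<le> (\<Sum>k. ennreal (exp (real k + 1)) * indicator (S k) z)"
    if z: "z \<in> space P" for z
  proof -
    define m where "m = nat \<lfloor>c*(f z)\<^sup>2\<rfloor>"
    have nn: "0 \<le> c*(f z)\<^sup>2" using c by simp
    have mf: "real m = of_int \<lfloor>c*(f z)\<^sup>2\<rfloor>" using nn by (simp add: m_def)
    have m1: "real m \<le> c*(f z)\<^sup>2" using of_int_floor_le[of "c*(f z)\<^sup>2"] mf by linarith
    have m2: "c*(f z)\<^sup>2 < real m + 1" using real_of_int_floor_add_one_gt[of "c*(f z)\<^sup>2"] mf by linarith
    have "ennreal (exp ((f z)\<^sup>2/(2*\<sigma>\<^sup>2))) \<le> ennreal (exp (real m + 1)) * indicator (S m) z"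
      using m1 m2 z by (simp add: e S_def)
    also have "\<dots> \<le> (\<Sum>k<Suc m. ennreal (exp (real k + 1)) * indicator (S k) z)"
      by (rule member_le_sum) auto
    also have "\<dots> \<le> (\<Sum>k. ennreal (exp (real k + 1)) * indicator (S k) z)"
      by (rule sum_le_suminf) auto
    finally show ?thesis .
  qed
  have "(\<integral>\<^sup>+z. ennreal (exp ((f z)\<^sup>2/(2*\<sigma>\<^sup>2))) \<partial>P) \<le>
        (\<integral>\<^sup>+z. (\<Sum>k. ennreal (exp (real k + 1)) * indicator (S k) z) \<partial>P)"
    by (intro nn_integral_mono pt)
  also have "\<dots> = (\<Sum>k. \<integral>\<^sup>+z. ennreal (exp (real k + 1)) * indicator (S k) z \<partial>P)"
    by (rule nn_integral_suminf) measurable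
  also have "\<dots> = (\<Sum>k. ennreal (exp (real k + 1)) * emeasure P (S k))"
    by (simp add: nn_integral_cmult_indicator)
  also have "\<dots> \<le> (\<Sum>k. ennreal (2*exp 1 * exp(-1)^k))"
  proof (rule suminf_le[OF _ summableI summableI])
    fix k :: nat
    have "S k = {z\<in>space P. \<bar>f z\<bar> \<ge> sqrt (real k / c)}"
    proof -
      have "real k \<le> c*(f z)\<^sup>2 \<longleftrightarrow> sqrt (real k / c) \<le> \<bar>f z\<bar>" for z
      proof -
        have "sqrt (real k / c) \<le> \<bar>f z\<bar> \<longleftrightarrow> sqrt (real k / c) \<le> sqrt ((f z)\<^sup>2)" by simp
        also have "\<dots> \<longleftrightarrow> real k / c \<le> (f z)\<^sup>2" by (rule real_sqrt_le_iff)
        also have "\<dots> \<longleftrightarrow> real k \<le> c*(f z)\<^sup>2" using c by (simp add: pos_divide_le_eq mult.commute)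
        finally show ?thesis by simp
      qed
      then show ?thesis by (auto simp: S_def)
    qed
    then have "emeasure P (S k) = ennreal (measure P {z\<in>space P. \<bar>f z\<bar> \<ge> sqrt (real k / c)})"
      by (simp add: emeasure_eq_measure)
    also have "\<dots> \<le> ennreal (2*exp(-((sqrt (real k / c))\<^sup>2/\<sigma>\<^sup>2)))"
      using c by (intro ennreal_leI tail) simp
    also have "(sqrt (real k / c))\<^sup>2/\<sigma>\<^sup>2 = 2 * real k"
      using c s by (simp add: c_def)
    finally have em: "emeasure P (S k) \<le> ennreal (2*exp(-(2*real k)))" .
    have "ennreal (exp (real k + 1)) * emeasure P (S k) \<le> ennreal (exp (real k + 1)) * ennreal (2*exp(-(2*real k)))"
      by (intro mult_left_mono em) auto
    also have "\<dots> = ennreal (exp (real k + 1) * (2*exp(-(2*real k))))"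
      by (simp add: ennreal_mult)
    also have "exp (real k + 1) * (2*exp(-(2*real k))) = 2*exp 1 * exp(-1)^k"
    proof -
      have X: "exp(-1)^k = exp(-real k)" using exp_of_nat_mult[of k "-1::real"] by simp
      have "exp (real k + 1) * exp(-(2*real k)) = exp(real k + 1 + -(2*real k))" by (rule mult_exp_exp)
      also have "real k + 1 + -(2*real k) = 1 + -real k" by simp
      also have "exp (1 + -real k) = exp 1 * exp (-real k)" by (rule exp_add)
      finally show ?thesis unfolding X by simp
    qed
    finally show "ennreal (exp (real k + 1)) * emeasure P (S k) \<le> ennreal (2*exp 1 * exp(-1)^k)" .
  qed
  also have "\<dots> < top"
  proof -
    have g: "summable (\<lambda>k::nat. exp(-1::real)^k)"
      by (rule summable_geometric) (use exp_less_mono[of "-1::real" 0] in simp)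
    have "summable (\<lambda>k::nat. 2*exp 1 * exp(-1::real)^k)"
      by (intro summable_mult g)
    then show ?thesis by (intro ennreal_suminf_neq_top[THEN less_top[THEN iffD1]]) auto
  qed
  finally show ?thesis .
qed


lemma vec_expmom:
  fixes P :: "'a measure" and f :: "'a \<Rightarrow> real^'d"
  assumes P: "prob_space P" and sg: "subgaussian_vec P f"
  shows "\<exists>c>0. (\<integral>\<^sup>+z. ennreal (exp (c * (norm (f z))\<^sup>2)) \<partial>P) < top"
proof -
  interpret prob_space P by fact
  obtain \<sigma> where s: "\<sigma> > 0" and sv: "\<And>v. norm v = 1 \<Longrightarrow> subgaussian_param P (\<lambda>z. v \<bullet> f z) \<sigma>"
    using sg unfolding subgaussian_vec_def by blast
  have fm[measurable]: "f \<in> borel_measurable P" using sg unfolding subgaussian_vec_def by blast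
  define D where "D = real CARD('d)"
  have D: "D \<ge> 1" unfolding D_def using zero_less_card_finite[where 'a='d] by linarith
  define c where "c = 1/(2*\<sigma>\<^sup>2*D)"
  have c: "c > 0" using s D by (simp add: c_def)
  have mj[measurable]: "(\<lambda>z. f z $ j) \<in> borel_measurable P" for j
  proof -
    have "(\<lambda>z. axis j 1 \<bullet> f z) \<in> borel_measurable P"
      by (intro borel_measurable_inner borel_measurable_const fm)
    then show ?thesis by (simp add: inner_axis')
  qed
  have fin: "(\<integral>\<^sup>+z. ennreal (exp ((f z $ j)\<^sup>2/(2*\<sigma>\<^sup>2))) \<partial>P) < top" for j
  proof -
    have t: "measure P {z\<in>space P. \<bar>f z $ j\<bar> \<ge> t} \<le> 2*exp(-(t\<^sup>2/\<sigma>\<^sup>2))" if "t \<ge> 0" for t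
      using sv[of "axis j 1", unfolded subgaussian_param_def] that by (simp add: norm_axis_1 inner_axis')
    show ?thesis using scalar_expmom[OF P mj s] t by blast
  qed
  have pt: "ennreal (exp (c * (norm y)\<^sup>2)) \<le> (\<Sum>j\<in>UNIV. ennreal (exp ((y $ j)\<^sup>2/(2*\<sigma>\<^sup>2))))"
    for y :: "real^'d"
  proof -
    define m where "m = Max (range (\<lambda>j. (y $ j)\<^sup>2))"
    have "m \<in> range (\<lambda>j. (y$j)\<^sup>2)" unfolding m_def by (rule Max_in) auto
    then obtain j0 where j0: "m = (y$j0)\<^sup>2" by auto
    have le: "(y$j)\<^sup>2 \<le> (y$j0)\<^sup>2" for j unfolding j0[symmetric] m_def by (rule Max_ge) auto
    have "(norm y)\<^sup>2 = (\<Sum>j\<in>UNIV. (y$j)\<^sup>2)"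
      unfolding power2_norm_eq_inner inner_vec_def by (simp add: power2_eq_square)
    also have "\<dots> \<le> (\<Sum>j\<in>(UNIV::'d set). (y$j0)\<^sup>2)" by (rule sum_mono) (rule le)
    also have "\<dots> = D * (y$j0)\<^sup>2" by (simp add: D_def)
    finally have "c*(norm y)\<^sup>2 \<le> c*(D*(y$j0)\<^sup>2)" using c by (intro mult_left_mono) auto
    also have "c*(D*(y$j0)\<^sup>2) = (y$j0)\<^sup>2/(2*\<sigma>\<^sup>2)" using D by (simp add: c_def)
    finally have "ennreal (exp (c*(norm y)\<^sup>2)) \<le> ennreal (exp ((y$j0)\<^sup>2/(2*\<sigma>\<^sup>2)))" by simp
    also have "\<dots> \<le> (\<Sum>j\<in>UNIV. ennreal (exp ((y $ j)\<^sup>2/(2*\<sigma>\<^sup>2))))" by (rule member_le_sum) auto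
    finally show ?thesis .
  qed
  have "(\<integral>\<^sup>+z. ennreal (exp (c*(norm (f z))\<^sup>2)) \<partial>P) \<le>
        (\<integral>\<^sup>+z. (\<Sum>j\<in>UNIV. ennreal (exp ((f z $ j)\<^sup>2/(2*\<sigma>\<^sup>2)))) \<partial>P)"
    by (intro nn_integral_mono pt)
  also have "\<dots> = (\<Sum>j\<in>UNIV. \<integral>\<^sup>+z. ennreal (exp ((f z $ j)\<^sup>2/(2*\<sigma>\<^sup>2))) \<partial>P)"
    by (rule nn_integral_sum) measurable
  also have "\<dots> < top" using fin by (simp add: ennreal_sum_less_top)
  finally show ?thesis using c by blast
qed

lemma expmom_combine:
  fixes P :: "'a measure" and h F1 F2 :: "'a \<Rightarrow> real"
  assumes c1: "c1 > 0" and c2: "c2 > 0"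
    and [measurable]: "h \<in> borel_measurable P"
    and i1: "(\<integral>\<^sup>+z. ennreal (exp (c1 * F1 z)) \<partial>P) < top"
    and i2: "(\<integral>\<^sup>+z. ennreal (exp (c2 * F2 z)) \<partial>P) < top"
    and [measurable]: "F1 \<in> borel_measurable P" "F2 \<in> borel_measurable P"
    and nn: "\<And>z. 0 \<le> F1 z" "\<And>z. 0 \<le> F2 z"
    and b: "\<And>z. \<bar>h z\<bar> \<le> F1 z + F2 z"
  shows "\<exists>c>0. (\<integral>\<^sup>+z. ennreal (exp (c * \<bar>h z\<bar>)) \<partial>P) < top"
proof -
  define c where "c = min c1 c2 / 2"
  have c: "c > 0" using c1 c2 by (simp add: c_def)
  have pt: "ennreal (exp (c * \<bar>h z\<bar>)) \<le> ennreal (exp (c1 * F1 z)) + ennreal (exp (c2 * F2 z))" for z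
  proof -
    have "c * \<bar>h z\<bar> \<le> c*F1 z + c*F2 z" using b[of z] c by (simp add: distrib_left[symmetric] mult_left_mono)
    also have "\<dots> \<le> max (c1 * F1 z) (c2 * F2 z)"
    proof -
      have "2*c \<le> c1" "2*c \<le> c2" by (auto simp: c_def)
      then have "2*c*F1 z \<le> c1*F1 z" "2*c*F2 z \<le> c2*F2 z"
        using nn[of z] by (auto intro: mult_right_mono)
      then show ?thesis by linarith
    qed
    finally have "exp (c * \<bar>h z\<bar>) \<le> exp (c1 * F1 z) + exp (c2 * F2 z)"
      by (smt (verit) exp_gt_zero exp_le_cancel_iff)
    then show ?thesis by (simp add: ennreal_plus[symmetric] del: ennreal_plus)
  qed
  have "(\<integral>\<^sup>+z. ennreal (exp (c * \<bar>h z\<bar>)) \<partial>P) \<le>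
      (\<integral>\<^sup>+z. ennreal (exp (c1 * F1 z)) + ennreal (exp (c2 * F2 z)) \<partial>P)"
    by (intro nn_integral_mono pt)
  also have "\<dots> = (\<integral>\<^sup>+z. ennreal (exp (c1 * F1 z)) \<partial>P) + (\<integral>\<^sup>+z. ennreal (exp (c2 * F2 z)) \<partial>P)"
    by (rule nn_integral_add) auto
  also have "\<dots> < top" using i1 i2 by simp
  finally show ?thesis using c by blast
qed

lemma exp_quad_bound: "exp (x::real) \<le> 1 + x + x\<^sup>2/2 * exp \<bar>x\<bar>"
proof -
  obtain t where t: "\<bar>t\<bar> \<le> \<bar>x\<bar>" and e: "exp x = (\<Sum>m<2. x^m / fact m) + exp t / fact 2 * x^2"
    using Maclaurin_exp_le[of x 2] by blast
  have s: "(\<Sum>m<2. x^m / fact m) = 1 + x" by (simp add: numeral_2_eq_2)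
  have f2: "fact 2 = (2::real)" by (simp add: numeral_2_eq_2)
  have "exp t \<le> exp \<bar>x\<bar>" using t by simp
  then have "exp t * x\<^sup>2 \<le> exp \<bar>x\<bar> * x\<^sup>2" by (rule mult_right_mono) simp
  then have "exp t / fact 2 * x^2 \<le> x\<^sup>2/2 * exp \<bar>x\<bar>" by (simp add: f2 mult.commute)
  then show ?thesis using e s by linarith
qed


lemma mgf_bound:
  fixes P :: "'a measure" and h :: "'a \<Rightarrow> real"
  assumes P: "prob_space P" and hm[measurable]: "h \<in> borel_measurable P" and c: "c > 0"
   and fin: "(\<integral>\<^sup>+z. ennreal (exp (c*\<bar>h z\<bar>)) \<partial>P) < top"
  shows "integrable P h \<and> (\<exists>l0>0. \<exists>K>0. \<forall>rr. \<bar>rr\<bar> \<le> l0 \<longrightarrow>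
           (\<integral>\<^sup>+z. ennreal (exp (rr*(h z - (\<integral>z. h z \<partial>P)))) \<partial>P) \<le> ennreal (exp (K*rr\<^sup>2)))"
proof -
  interpret prob_space P by fact
  have ie: "integrable P (\<lambda>z. exp (c*\<bar>h z\<bar>))"
    apply (rule integrableI_bounded)
     apply measurable
    using fin by simp
  have ih: "integrable P h"
  proof (rule Bochner_Integration.integrable_bound[OF _ hm])
    show "integrable P (\<lambda>z. exp (c*\<bar>h z\<bar>) / c)" using ie by simp
    show "AE z in P. norm (h z) \<le> norm (exp (c*\<bar>h z\<bar>) / c)"
    proof (intro AE_I2)
      fix z
      have "c*\<bar>h z\<bar> \<le> exp (c*\<bar>h z\<bar>)" using exp_ge_add_one_self[of "c*\<bar>h z\<bar>"] by linarith
      then have "\<bar>h z\<bar> \<le> exp (c*\<bar>h z\<bar>) / c" using c by (simp add: field_simps)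
      then show "norm (h z) \<le> norm (exp (c*\<bar>h z\<bar>) / c)" using c by simp
    qed
  qed
  define l0 where "l0 = c/4"
  have l0: "l0 > 0" using c by (simp add: l0_def)
  define \<mu> where "\<mu> = (\<integral>z. h z \<partial>P)"
  define G where "G z = (h z - \<mu>)\<^sup>2 * exp (l0*\<bar>h z - \<mu>\<bar>)" for z
  have Gm[measurable]: "G \<in> borel_measurable P" unfolding G_def by measurable
  have G0: "0 \<le> G z" for z unfolding G_def by simp
  define Cst where "Cst = 2/l0\<^sup>2 * exp (2*l0*\<bar>\<mu>\<bar>)"
  have Cst: "Cst > 0" using l0 by (simp add: Cst_def)
  have Gb: "G z \<le> Cst * exp (c*\<bar>h z\<bar>)" for z
  proof -
    define w where "w = h z - \<mu>"
    have lw: "0 \<le> l0*\<bar>w\<bar>" using l0 by simp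
    have w1: "w\<^sup>2 \<le> 2/l0\<^sup>2 * exp (l0*\<bar>w\<bar>)"
    proof -
      have "1 + l0*\<bar>w\<bar> + (l0*\<bar>w\<bar>)\<^sup>2/2 \<le> exp(l0*\<bar>w\<bar>)" using lw by (rule exp_lower_Taylor_quadratic)
      then have "(l0*\<bar>w\<bar>)\<^sup>2 \<le> 2*exp(l0*\<bar>w\<bar>)" using lw by linarith
      then have "l0\<^sup>2 * w\<^sup>2 \<le> 2*exp(l0*\<bar>w\<bar>)" by (simp add: power_mult_distrib)
      then show ?thesis using l0 by (simp add: field_simps)
    qed
    have "G z = w\<^sup>2 * exp (l0*\<bar>w\<bar>)" by (simp add: G_def w_def)
    also have "\<dots> \<le> (2/l0\<^sup>2 * exp (l0*\<bar>w\<bar>)) * exp (l0*\<bar>w\<bar>)"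
      by (rule mult_right_mono[OF w1]) simp
    also have "\<dots> = 2/l0\<^sup>2 * exp (2*l0*\<bar>w\<bar>)"
      by (simp add: mult_exp_exp)
    also have "\<dots> \<le> 2/l0\<^sup>2 * exp (c*\<bar>h z\<bar> + 2*l0*\<bar>\<mu>\<bar>)"
    proof -
      have "\<bar>w\<bar> \<le> \<bar>h z\<bar> + \<bar>\<mu>\<bar>" unfolding w_def by (rule abs_triangle_ineq4)
      then have "2*l0*\<bar>w\<bar> \<le> 2*l0*\<bar>h z\<bar> + 2*l0*\<bar>\<mu>\<bar>" using l0 by (simp add: distrib_left[symmetric] mult_left_mono)
      also have "2*l0*\<bar>h z\<bar> \<le> c*\<bar>h z\<bar>" using c by (simp add: l0_def mult_right_mono)
      finally have "2*l0*\<bar>w\<bar> \<le> c*\<bar>h z\<bar> + 2*l0*\<bar>\<mu>\<bar>" by simp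
      then show ?thesis using l0 by (intro mult_left_mono) auto
    qed
    also have "\<dots> = Cst * exp (c*\<bar>h z\<bar>)" by (simp add: Cst_def exp_add)
    finally show ?thesis .
  qed
  have iG: "integrable P G"
  proof (rule Bochner_Integration.integrable_bound[OF _ Gm])
    show "integrable P (\<lambda>z. Cst * exp (c*\<bar>h z\<bar>))" using ie by simp
    show "AE z in P. norm (G z) \<le> norm (Cst * exp (c*\<bar>h z\<bar>))"
      using Gb G0 Cst by (intro AE_I2) (simp add: abs_mult)
  qed
  define K0 where "K0 = (\<integral>z. G z \<partial>P)"
  have K0: "0 \<le> K0" unfolding K0_def using G0 by (intro integral_nonneg_AE) auto
  define K where "K = K0/2 + 1"
  have K: "K > 0" using K0 by (simp add: K_def)
  have main: "(\<integral>\<^sup>+z. ennreal (exp (rr*(h z - \<mu>))) \<partial>P) \<le> ennreal (exp (K*rr\<^sup>2))"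
    if lam: "\<bar>rr\<bar> \<le> l0" for rr
  proof -
    have pt: "exp (rr*(h z - \<mu>)) \<le> (1 - rr*\<mu>) + rr * h z + rr\<^sup>2/2 * G z" for z
    proof -
      define w where "w = h z - \<mu>"
      have "exp (rr*w) \<le> 1 + rr*w + (rr*w)\<^sup>2/2 * exp \<bar>rr*w\<bar>" by (rule exp_quad_bound)
      also have "(rr*w)\<^sup>2/2 * exp \<bar>rr*w\<bar> \<le> rr\<^sup>2/2 * G z"
      proof -
        have "\<bar>rr*w\<bar> \<le> l0*\<bar>w\<bar>" using lam by (simp add: abs_mult mult_right_mono)
        then have "exp \<bar>rr*w\<bar> \<le> exp (l0*\<bar>w\<bar>)" by simp
        then have "(rr\<^sup>2/2 * w\<^sup>2) * exp \<bar>rr*w\<bar> \<le> (rr\<^sup>2/2 * w\<^sup>2) * exp (l0*\<bar>w\<bar>)"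
          by (rule mult_left_mono) simp
        then show ?thesis by (simp add: G_def w_def power_mult_distrib mult.assoc)
      qed
      finally show ?thesis by (simp add: w_def algebra_simps)
    qed
    have ii: "integrable P (\<lambda>z. (1 - rr*\<mu>) + rr * h z + rr\<^sup>2/2 * G z)"
      using ih iG by simp
    have "(\<integral>\<^sup>+z. ennreal (exp (rr*(h z - \<mu>))) \<partial>P) \<le>
          (\<integral>\<^sup>+z. ennreal ((1 - rr*\<mu>) + rr * h z + rr\<^sup>2/2 * G z) \<partial>P)"
      by (intro nn_integral_mono ennreal_leI pt)
    also have "\<dots> = ennreal (\<integral>z. (1 - rr*\<mu>) + rr * h z + rr\<^sup>2/2 * G z \<partial>P)"
    proof (rule nn_integral_eq_integral[OF ii])
      show "AE z in P. 0 \<le> (1 - rr*\<mu>) + rr * h z + rr\<^sup>2/2 * G z"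
        using pt by (intro AE_I2) (meson exp_ge_zero order.trans)
    qed
    also have "(\<integral>z. (1 - rr*\<mu>) + rr * h z + rr\<^sup>2/2 * G z \<partial>P) = 1 + rr\<^sup>2/2 * K0"
      using ih iG by (simp add: K0_def \<mu>_def prob_space)
    also have "1 + rr\<^sup>2/2 * K0 \<le> exp (K*rr\<^sup>2)"
    proof -
      have "1 + rr\<^sup>2/2 * K0 \<le> 1 + K*rr\<^sup>2" by (simp add: K_def algebra_simps)
      also have "\<dots> \<le> exp (K*rr\<^sup>2)" by (rule exp_ge_add_one_self)
      finally show ?thesis .
    qed
    finally show ?thesis by (meson ennreal_leI)
  qed
  show ?thesis using ih main l0 K unfolding \<mu>_def by blast
qed


lemma chernoff_upper:
  fixes M :: "'m measure" and W :: "nat \<Rightarrow> 'm \<Rightarrow> real"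
  assumes M: "prob_space M" and ind: "prob_space.indep_vars M (\<lambda>_. borel) W UNIV"
    and mgf: "\<And>i r. \<bar>r\<bar> \<le> l0 \<Longrightarrow> (\<integral>\<^sup>+\<omega>. ennreal (exp (r * W i \<omega>)) \<partial>M) \<le> ennreal (exp (K * r\<^sup>2))"
    and K: "K > 0" and t: "t > 0" "t \<le> 2*K*l0"
  shows "measure M {\<omega>\<in>space M. real n * t \<le> (\<Sum>i<n. W i \<omega>)} \<le> exp (-(real n * t\<^sup>2/(4*K)))"
proof -
  interpret prob_space M by fact
  have Wm[measurable]: "W i \<in> borel_measurable M" for i using ind unfolding indep_vars_def by auto
  define r where "r = t/(2*K)"
  have r: "r > 0" "r \<le> l0" using t K by (auto simp: r_def field_simps)
  have "emeasure M {\<omega>\<in>space M. (\<Sum>i<n. W i \<omega>) \<ge> real n * t} \<le>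
      ennreal (exp (-r*(real n*t))) * (\<integral>\<^sup>+\<omega>. ennreal (exp (r * (\<Sum>i<n. W i \<omega>))) * indicator (space M) \<omega> \<partial>M)"
    using r(1) by (intro Chernoff_ineq_nn_integral_ge) auto
  also have "(\<integral>\<^sup>+\<omega>. ennreal (exp (r * (\<Sum>i<n. W i \<omega>))) * indicator (space M) \<omega> \<partial>M) =
      (\<integral>\<^sup>+\<omega>. (\<Prod>i<n. ennreal (exp (r * W i \<omega>))) \<partial>M)"
    by (intro nn_integral_cong) (simp add: sum_distrib_left exp_sum prod_ennreal)
  also have "\<dots> = (\<Prod>i<n. \<integral>\<^sup>+\<omega>. ennreal (exp (r * W i \<omega>)) \<partial>M)"
  proof (rule indep_vars_nn_integral)
    have "indep_vars (\<lambda>_. borel) (\<lambda>i \<omega>. (\<lambda>x. ennreal (exp (r*x))) (W i \<omega>)) {..<n}"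
      by (rule indep_vars_compose2[OF indep_vars_subset[OF ind]]) auto
    then show "indep_vars (\<lambda>_. borel) (\<lambda>i \<omega>. ennreal (exp (r * W i \<omega>))) {..<n}" by simp
  qed auto
  also have "ennreal (exp (-r*(real n*t))) * (\<Prod>i<n. \<integral>\<^sup>+\<omega>. ennreal (exp (r * W i \<omega>)) \<partial>M) \<le>
      ennreal (exp (-r*(real n*t))) * (\<Prod>i<n. ennreal (exp (K*r\<^sup>2)))"
    by (intro mult_left_mono prod_mono_ennreal mgf) (use r in auto)
  also have "(\<Prod>i<n. ennreal (exp (K*r\<^sup>2))) = ennreal (exp (real n * (K*r\<^sup>2)))"
    by (simp add: prod_ennreal exp_of_nat_mult ennreal_power)
  also have "ennreal (exp (-r*(real n*t))) * ennreal (exp (real n * (K*r\<^sup>2))) =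
      ennreal (exp (-(real n * t\<^sup>2/(4*K))))"
  proof -
    have "-r*(real n*t) + real n * (K*r\<^sup>2) = -(real n * t\<^sup>2/(4*K))"
      using K by (simp add: r_def field_simps power2_eq_square)
    then show ?thesis by (simp add: ennreal_mult[symmetric] exp_add[symmetric] del: ennreal_mult)
  qed
  finally show ?thesis by (simp add: emeasure_eq_measure)
qed

lemma chernoff_abs:
  fixes M :: "'m measure" and W :: "nat \<Rightarrow> 'm \<Rightarrow> real"
  assumes M: "prob_space M" and ind: "prob_space.indep_vars M (\<lambda>_. borel) W UNIV"
    and mgf: "\<And>i r. \<bar>r\<bar> \<le> l0 \<Longrightarrow> (\<integral>\<^sup>+\<omega>. ennreal (exp (r * W i \<omega>)) \<partial>M) \<le> ennreal (exp (K * r\<^sup>2))"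
    and K: "K > 0" and t: "t > 0" "t \<le> 2*K*l0"
  shows "measure M {\<omega>\<in>space M. real n * t \<le> \<bar>\<Sum>i<n. W i \<omega>\<bar>} \<le> 2 * exp (-(real n * t\<^sup>2/(4*K)))"
proof -
  interpret prob_space M by fact
  have Wm[measurable]: "W i \<in> borel_measurable M" for i using ind unfolding indep_vars_def by auto
  have ind2: "indep_vars (\<lambda>_. borel) (\<lambda>i \<omega>. - W i \<omega>) UNIV"
  proof -
    have "indep_vars (\<lambda>_. borel) (\<lambda>i \<omega>. (\<lambda>x. - x) (W i \<omega>)) UNIV"
      by (rule indep_vars_compose2[OF ind]) auto
    then show ?thesis by simp
  qed
  have mgf2: "(\<integral>\<^sup>+\<omega>. ennreal (exp (r * (- W i \<omega>))) \<partial>M) \<le> ennreal (exp (K * r\<^sup>2))" if "\<bar>r\<bar> \<le> l0" for i r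
    using mgf[of "-r" i] that by simp
  have u1: "measure M {\<omega>\<in>space M. real n * t \<le> (\<Sum>i<n. W i \<omega>)} \<le> exp (-(real n * t\<^sup>2/(4*K)))"
    by (rule chernoff_upper[OF M ind mgf K t])
  have u2: "measure M {\<omega>\<in>space M. real n * t \<le> (\<Sum>i<n. - W i \<omega>)} \<le> exp (-(real n * t\<^sup>2/(4*K)))"
    by (rule chernoff_upper[OF M ind2 mgf2 K t])
  have "{\<omega>\<in>space M. real n * t \<le> \<bar>\<Sum>i<n. W i \<omega>\<bar>} =
        {\<omega>\<in>space M. real n * t \<le> (\<Sum>i<n. W i \<omega>)} \<union> {\<omega>\<in>space M. real n * t \<le> (\<Sum>i<n. - W i \<omega>)}"
    by (auto simp: sum_negf abs_if)
  then have "measure M {\<omega>\<in>space M. real n * t \<le> \<bar>\<Sum>i<n. W i \<omega>\<bar>} \<le>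
        measure M {\<omega>\<in>space M. real n * t \<le> (\<Sum>i<n. W i \<omega>)} + measure M {\<omega>\<in>space M. real n * t \<le> (\<Sum>i<n. - W i \<omega>)}"
    by (simp add: measure_Un_le)
  with u1 u2 show ?thesis by linarith
qed


lemma ratio_bound:
  fixes a b A B t :: real
  assumes B: "B > 0" and ha: "\<bar>a - A\<bar> \<le> t" and hb: "\<bar>b - B\<bar> \<le> t" and t: "t \<le> B/2"
  shows "\<bar>a/b - A/B\<bar> \<le> 2*(B + \<bar>A\<bar>)/B\<^sup>2 * t"
proof -
  have b: "b \<ge> B/2" using hb t by linarith
  have bpos: "b > 0" using b B by linarith
  have t0: "t \<ge> 0" using ha by linarith
  have eq: "a/b - A/B = ((a - A)*B - A*(b - B))/(b*B)" using bpos B by (simp add: field_simps)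
  have num: "\<bar>(a - A)*B - A*(b - B)\<bar> \<le> t*B + \<bar>A\<bar>*t"
  proof -
    have 1: "\<bar>(a - A)*B\<bar> \<le> t*B" using ha B by (simp add: abs_mult mult_right_mono)
    have 2: "\<bar>A*(b - B)\<bar> \<le> \<bar>A\<bar>*t" using hb by (simp add: abs_mult mult_left_mono)
    have "\<bar>(a - A)*B - A*(b - B)\<bar> \<le> \<bar>(a - A)*B\<bar> + \<bar>A*(b - B)\<bar>" by (rule abs_triangle_ineq4)
    with 1 2 show ?thesis by linarith
  qed
  have den: "B\<^sup>2/2 \<le> b*B" using b B by (simp add: power2_eq_square mult_right_mono)
  have "\<bar>a/b - A/B\<bar> = \<bar>(a - A)*B - A*(b - B)\<bar>/(b*B)" using eq bpos B by (simp add: abs_divide abs_mult)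
  also have "\<dots> \<le> (t*B + \<bar>A\<bar>*t)/(B\<^sup>2/2)"
    by (rule frac_le) (use num den B t0 in auto)
  also have "\<dots> = 2*(B + \<bar>A\<bar>)/B\<^sup>2 * t" using B by (simp add: field_simps power2_eq_square)
  finally show ?thesis .
qed

lemma conc_fun:
  fixes M :: "'m measure" and Z :: "nat \<Rightarrow> 'm \<Rightarrow> 'o" and N :: "'o measure" and h :: "'o \<Rightarrow> real"
  assumes M: "prob_space M" and ind: "prob_space.indep_vars M (\<lambda>_. N) Z UNIV"
    and law: "\<And>i. distr M N (Z i) = P" and hm[measurable]: "h \<in> borel_measurable N"
    and mgf: "\<And>r. \<bar>r\<bar> \<le> l0 \<Longrightarrow> (\<integral>\<^sup>+z. ennreal (exp (r*(h z - \<mu>))) \<partial>P) \<le> ennreal (exp (K*r\<^sup>2))"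
    and K: "K > 0" and t: "t > 0" "t \<le> 2*K*l0"
  shows "measure M {\<omega>\<in>space M. real n * t \<le> \<bar>\<Sum>i<n. (h (Z i \<omega>) - \<mu>)\<bar>} \<le> 2*exp(-(real n*t\<^sup>2/(4*K)))"
proof -
  interpret prob_space M by fact
  have Zm[measurable]: "Z i \<in> M \<rightarrow>\<^sub>M N" for i using ind unfolding indep_vars_def by auto
  have ind2: "indep_vars (\<lambda>_. borel) (\<lambda>i \<omega>. h (Z i \<omega>) - \<mu>) UNIV"
  proof -
    have "indep_vars (\<lambda>_. borel) (\<lambda>i \<omega>. (\<lambda>z. h z - \<mu>) (Z i \<omega>)) UNIV"
      by (rule indep_vars_compose2[OF ind]) auto
    then show ?thesis by simp
  qed
  have mgf2: "(\<integral>\<^sup>+\<omega>. ennreal (exp (r * (h (Z i \<omega>) - \<mu>))) \<partial>M) \<le> ennreal (exp (K * r\<^sup>2))"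
    if "\<bar>r\<bar> \<le> l0" for i r
  proof -
    have fm: "(\<lambda>z. ennreal (exp (r*(h z - \<mu>)))) \<in> borel_measurable (distr M N (Z i))"
      by (subst measurable_cong_sets[OF sets_distr refl]) measurable
    have "(\<integral>\<^sup>+\<omega>. ennreal (exp (r * (h (Z i \<omega>) - \<mu>))) \<partial>M) = (\<integral>\<^sup>+z. ennreal (exp (r*(h z - \<mu>))) \<partial>distr M N (Z i))"
      using nn_integral_distr[OF Zm fm] by simp
    also have "\<dots> = (\<integral>\<^sup>+z. ennreal (exp (r*(h z - \<mu>))) \<partial>P)" by (simp add: law)
    finally show ?thesis using mgf[OF that] by simp
  qed
  show ?thesis
    using chernoff_abs[where W="\<lambda>i \<omega>. h (Z i \<omega>) - \<mu>", OF M ind2 mgf2 K t] by simp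
qed


lemma good_lemma:
  fixes a b q :: "nat \<Rightarrow> real"
  assumes lohi: "lo \<le> hi" and EB: "EB > 0" and np: "real n > 0"
   and wa: "\<bar>\<Sum>i<n. (a i - EA)\<bar> < real n * t" and wb: "\<bar>\<Sum>i<n. (b i - EB)\<bar> < real n * t" and t: "t \<le> EB/2"
   and am: "is_arg_min (\<lambda>\<beta>. (1/real n) * (\<Sum>i<n. q i - 2*\<beta>*a i + \<beta>\<^sup>2*b i)) (\<lambda>\<beta>. \<beta> \<in> {lo..hi}) bh"
  shows "\<bar>bh - max lo (min hi (EA/EB))\<bar> \<le> 2*(EB + \<bar>EA\<bar>)/EB\<^sup>2 * t"
proof -
  define Ah where "Ah = (1/real n) * (\<Sum>i<n. a i)"
  define Bh where "Bh = (1/real n) * (\<Sum>i<n. b i)"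
  define Qh where "Qh = (1/real n) * (\<Sum>i<n. q i)"
  have sA: "(\<Sum>i<n. (a i - EA)) = (\<Sum>i<n. a i) - real n * EA" by (simp add: sum_subtractf)
  have sB: "(\<Sum>i<n. (b i - EB)) = (\<Sum>i<n. b i) - real n * EB" by (simp add: sum_subtractf)
  have dA: "Ah - EA = (\<Sum>i<n. (a i - EA)) / real n"
    unfolding sA Ah_def using np by (simp add: field_simps)
  have dB: "Bh - EB = (\<Sum>i<n. (b i - EB)) / real n"
    unfolding sB Bh_def using np by (simp add: field_simps)
  have hA: "\<bar>Ah - EA\<bar> \<le> t"
    unfolding dA abs_divide using wa np by (simp add: pos_divide_le_eq mult.commute)
  have hB: "\<bar>Bh - EB\<bar> \<le> t"
    unfolding dB abs_divide using wb np by (simp add: pos_divide_le_eq mult.commute)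
  have Bh: "Bh > 0" using hB t EB by linarith
  have Femp: "(\<lambda>\<beta>. (1/real n) * (\<Sum>i<n. q i - 2*\<beta>*a i + \<beta>\<^sup>2*b i)) = (\<lambda>\<beta>. Qh - 2*\<beta>*Ah + \<beta>\<^sup>2*Bh)"
  proof
    fix \<beta>
    have "(\<Sum>i<n. q i - 2*\<beta>*a i + \<beta>\<^sup>2*b i) = (\<Sum>i<n. q i) - 2*\<beta>*(\<Sum>i<n. a i) + \<beta>\<^sup>2*(\<Sum>i<n. b i)"
      by (simp add: sum.distrib sum_subtractf sum_distrib_left)
    then have "(1/real n) * (\<Sum>i<n. q i - 2*\<beta>*a i + \<beta>\<^sup>2*b i) = (1/real n) * ((\<Sum>i<n. q i) - 2*\<beta>*(\<Sum>i<n. a i) + \<beta>\<^sup>2*(\<Sum>i<n. b i))"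
      by (simp only:)
    also have "\<dots> = Qh - 2*\<beta>*Ah + \<beta>\<^sup>2*Bh"
      unfolding Qh_def Ah_def Bh_def by (simp add: algebra_simps)
    finally show "(1/real n) * (\<Sum>i<n. q i - 2*\<beta>*a i + \<beta>\<^sup>2*b i) = Qh - 2*\<beta>*Ah + \<beta>\<^sup>2*Bh" .
  qed
  have bhat: "bh = max lo (min hi (Ah/Bh))"
    using am unfolding Femp by (rule clip_argmin[OF lohi Bh])
  have "\<bar>bh - max lo (min hi (EA/EB))\<bar> \<le> \<bar>Ah/Bh - EA/EB\<bar>" unfolding bhat by (rule clip_lip)
  also have "\<dots> \<le> 2*(EB + \<bar>EA\<bar>)/EB\<^sup>2 * t" by (rule ratio_bound[OF EB hA hB t])
  finally show ?thesis .
qed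

lemma final_step:
  fixes M :: "'m measure" and Z :: "nat \<Rightarrow> 'm \<Rightarrow> 'o" and N :: "'o measure"
    and af bf qf :: "'o \<Rightarrow> real" and Obj :: "nat \<Rightarrow> 'm \<Rightarrow> real \<Rightarrow> real"
  assumes Mps: "prob_space M" and indZ: "prob_space.indep_vars M (\<lambda>_. N) Z UNIV"
    and lawZ: "\<And>i. distr M N (Z i) = P"
    and afN[measurable]: "af \<in> borel_measurable N" and bfN[measurable]: "bf \<in> borel_measurable N"
    and mA': "\<And>r. \<bar>r\<bar> \<le> l0 \<Longrightarrow> (\<integral>\<^sup>+z. ennreal (exp (r*(af z - EA))) \<partial>P) \<le> ennreal (exp (K*r\<^sup>2))"
    and mB': "\<And>r. \<bar>r\<bar> \<le> l0 \<Longrightarrow> (\<integral>\<^sup>+z. ennreal (exp (r*(bf z - EB))) \<partial>P) \<le> ennreal (exp (K*r\<^sup>2))"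
    and l0: "l0 > 0" and K: "K > 0" and EB: "EB > 0" and lohi: "\<beta>min \<le> \<beta>max"
    and bstar: "\<beta>star = max \<beta>min (min \<beta>max (EA/EB))"
    and Femp: "\<And>n \<omega>. Obj n \<omega> = (\<lambda>\<beta>. (1/real n) * (\<Sum>i<n. qf (Z i \<omega>) - 2*\<beta>*af (Z i \<omega>) + \<beta>\<^sup>2*bf (Z i \<omega>)))"
  shows "\<exists>C>0. \<exists>C'>0. \<forall>(n::nat) (\<delta>::real). 0 < \<delta> \<and> \<delta> < 1 \<and>
            real n / ln (real n) \<ge> C * (1 + ln (1 / \<delta>)) \<longrightarrow>
            (\<exists>A \<in> sets M. measure M A \<ge> 1 - \<delta> \<and>
               (\<forall>\<omega>\<in>A. \<forall>\<beta>hat. is_arg_min (Obj n \<omega>) (\<lambda>\<beta>. \<beta> \<in> {\<beta>min..\<beta>max}) \<beta>hat \<longrightarrow>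
                 \<bar>\<beta>hat - \<beta>star\<bar> \<le> C' * sqrt (ln (real n)) * sqrt ((1 + ln (1 / \<delta>)) / real n)))"
proof -
  interpret M: prob_space M by fact
  have Zm[measurable]: "Z i \<in> M \<rightarrow>\<^sub>M N" for i
    using indZ unfolding M.indep_vars_def by auto
  define m where "m = min (2*K*l0) (EB/2)"
  have m: "m > 0" using K l0 EB by (simp add: m_def)
  define s where "s = sqrt (12*K)"
  have s: "s > 0" "s\<^sup>2 = 12*K" using K by (auto simp: s_def)
  define C where "C = s\<^sup>2/(ln 2 * m\<^sup>2)"
  have C: "C > 0" using s m K by (simp add: C_def)
  define Cpp where "Cpp = 2*(EB + \<bar>EA\<bar>)/EB\<^sup>2"
  have Cpp: "Cpp > 0" using EB by (simp add: Cpp_def add_pos_nonneg)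
  define C' where "C' = Cpp * s / sqrt (ln 2)"
  have C': "C' > 0" using Cpp s by (simp add: C'_def)
  have main: "0 < \<delta> \<and> \<delta> < 1 \<and> real n / ln (real n) \<ge> C * (1 + ln (1 / \<delta>)) \<longrightarrow>
            (\<exists>A \<in> sets M. measure M A \<ge> 1 - \<delta> \<and>
               (\<forall>\<omega>\<in>A. \<forall>\<beta>hat. is_arg_min
                   (Obj n \<omega>)
                   (\<lambda>\<beta>. \<beta> \<in> {\<beta>min..\<beta>max}) \<beta>hat \<longrightarrow>
                 \<bar>\<beta>hat - \<beta>star\<bar> \<le> C' * sqrt (ln (real n)) * sqrt ((1 + ln (1 / \<delta>)) / real n)))"
    for n :: nat and \<delta> :: real
  proof (intro impI)
    assume H: "0 < \<delta> \<and> \<delta> < 1 \<and> real n / ln (real n) \<ge> C * (1 + ln (1 / \<delta>))"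
    define L where "L = 1 + ln (1/\<delta>)"
    have d: "0 < \<delta>" "\<delta> < 1" using H by auto
    have lnd: "ln (1/\<delta>) > 0" using d by (intro ln_gt_zero) (simp add: field_simps)
    have L: "L \<ge> 1" using lnd by (simp add: L_def)
    have HL: "C * L \<le> real n / ln (real n)" using H by (simp add: L_def)
    have n2: "n \<ge> 2"
    proof (rule ccontr)
      assume "\<not> n \<ge> 2"
      then have "n = 0 \<or> n = 1" by auto
      then have "real n / ln (real n) = 0" by auto
      moreover have "C * L > 0" using C L by simp
      ultimately show False using HL by linarith
    qed
    have ln2: "ln 2 > (0::real)" by simp
    have lnn: "ln (real n) \<ge> ln 2" using n2 by simp
    have lnnp: "ln (real n) > 0" using lnn ln2 by linarith
    have np: "real n > 0" using n2 by simp
    define t where "t = s * sqrt (L / real n)"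
    have tp: "t > 0" using s L np by (simp add: t_def)
    have t2: "t\<^sup>2 = s\<^sup>2 * L / real n" using L np by (simp add: t_def power_mult_distrib)
    have Ln: "L / real n \<le> 1 / (C * ln 2)"
    proof -
      have "L \<le> real n / ln (real n) / C" using HL C by (metis mult.commute pos_le_divide_eq)
      then have "L / real n \<le> 1 / (C * ln (real n))" using np C lnnp by (simp add: field_simps)
      also have "\<dots> \<le> 1 / (C * ln 2)" using C ln2 lnn lnnp by (intro divide_left_mono mult_left_mono mult_pos_pos) auto
      finally show ?thesis .
    qed
    have tm: "t \<le> m"
    proof -
      have "t\<^sup>2 = s\<^sup>2 * (L / real n)" unfolding t2 by simp
      also have "\<dots> \<le> s\<^sup>2 * (1 / (C * ln 2))" by (rule mult_left_mono[OF Ln]) simp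
      finally have "t\<^sup>2 \<le> s\<^sup>2 * (1 / (C * ln 2))" .
      also have "\<dots> = m\<^sup>2" using s m ln2 K by (simp add: C_def field_simps)
      finally show ?thesis by (rule power2_le_imp_le) (use m in auto)
    qed
    have m1: "m \<le> 2*K*l0" unfolding m_def by (rule min.cobounded1)
    have m2: "m \<le> EB/2" unfolding m_def by (rule min.cobounded2)
    have t1: "t \<le> 2*K*l0" "t \<le> EB/2" using tm m1 m2 by linarith+
    have t2': "t\<^sup>2 = 12*K*L/real n" by (simp only: t2 s(2))
    have a1: "real n * (12*K*L/real n) = 12*K*L" using np by simp
    have a2: "12*K*L/(4*K) = 3*L" using K by simp
    have "real n * t\<^sup>2/(4*K) = (real n * (12*K*L/real n))/(4*K)" by (simp only: t2')
    also have "\<dots> = 3*L" by (simp only: a1 a2)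
    finally have "real n * t\<^sup>2/(4*K) = 3*L" .
    then have ex: "2*exp(-(real n*t\<^sup>2/(4*K))) = 2*exp(-(3*L))" by simp
    have dl: "4*exp(-(3*L)) \<le> \<delta>"
    proof -
      have lnd2: "ln \<delta> = 1 - L" using d by (simp add: L_def ln_div)
      have de: "\<delta> = exp (1 - L)" using exp_ln[of \<delta>] d lnd2 by simp
      have e4: "4*exp(-(3*L)) = exp (ln 4 + -(3*L))" using exp_add[of "ln 4" "-(3*L)"] by simp
      have "ln (4::real) \<le> 3" using ln_le_minus_one[of 4] by simp
      then have "ln 4 + -(3*L) \<le> 1 - L" using L by linarith
      then have "exp (ln 4 + -(3*L)) \<le> exp (1 - L)" by (simp only: exp_le_cancel_iff)
      then show ?thesis using e4 de by linarith
    qed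
    define Ea where "Ea = {\<omega>\<in>space M. real n * t \<le> \<bar>\<Sum>i<n. (af (Z i \<omega>) - EA)\<bar>}"
    define Eb where "Eb = {\<omega>\<in>space M. real n * t \<le> \<bar>\<Sum>i<n. (bf (Z i \<omega>) - EB)\<bar>}"
    have "measure M Ea \<le> 2*exp(-(real n*t\<^sup>2/(4*K)))"
      unfolding Ea_def by (rule conc_fun[OF Mps indZ lawZ afN mA' K tp t1(1)])
    then have pEa: "measure M Ea \<le> 2*exp(-(3*L))" using ex by linarith
    have "measure M Eb \<le> 2*exp(-(real n*t\<^sup>2/(4*K)))"
      unfolding Eb_def by (rule conc_fun[OF Mps indZ lawZ bfN mB' K tp t1(1)])
    then have pEb: "measure M Eb \<le> 2*exp(-(3*L))" using ex by linarith
    define Aset where "Aset = {\<omega>\<in>space M. \<bar>\<Sum>i<n. (af (Z i \<omega>) - EA)\<bar> < real n * t \<and> \<bar>\<Sum>i<n. (bf (Z i \<omega>) - EB)\<bar> < real n * t}"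
    have hZa: "(\<lambda>\<omega>. af (Z i \<omega>)) \<in> borel_measurable M" for i by (rule measurable_compose[OF Zm afN])
    have hZb: "(\<lambda>\<omega>. bf (Z i \<omega>)) \<in> borel_measurable M" for i by (rule measurable_compose[OF Zm bfN])
    have sa[measurable]: "(\<lambda>\<omega>. \<bar>\<Sum>i<n. (af (Z i \<omega>) - EA)\<bar>) \<in> borel_measurable M"
      by (intro borel_measurable_abs borel_measurable_sum borel_measurable_diff hZa borel_measurable_const)
    have sb[measurable]: "(\<lambda>\<omega>. \<bar>\<Sum>i<n. (bf (Z i \<omega>) - EB)\<bar>) \<in> borel_measurable M"
      by (intro borel_measurable_abs borel_measurable_sum borel_measurable_diff hZb borel_measurable_const)
    have Aset: "Aset \<in> sets M" unfolding Aset_def by measurable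
    have Eam: "Ea \<in> sets M" unfolding Ea_def by measurable
    have Ebm: "Eb \<in> sets M" unfolding Eb_def by measurable
    have sub: "space M - Aset \<subseteq> Ea \<union> Eb" unfolding Aset_def Ea_def Eb_def by auto
    have "measure M (space M - Aset) \<le> measure M (Ea \<union> Eb)"
      by (rule M.finite_measure_mono[OF sub]) (use Eam Ebm in auto)
    also have "\<dots> \<le> measure M Ea + measure M Eb" by (rule measure_Un_le[OF Eam Ebm])
    finally have "measure M (space M - Aset) \<le> \<delta>" using pEa pEb dl by linarith
    then have pA: "measure M Aset \<ge> 1 - \<delta>" using M.prob_compl[OF Aset] by linarith
    have good: "\<bar>\<beta>hat - \<beta>star\<bar> \<le> C' * sqrt (ln (real n)) * sqrt (L / real n)"
      if w: "\<omega> \<in> Aset" and am: "is_arg_min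
                   (Obj n \<omega>)
                   (\<lambda>\<beta>. \<beta> \<in> {\<beta>min..\<beta>max}) \<beta>hat" for \<omega> \<beta>hat
    proof -
      have wa: "\<bar>\<Sum>i<n. (af (Z i \<omega>) - EA)\<bar> < real n * t" and wb: "\<bar>\<Sum>i<n. (bf (Z i \<omega>) - EB)\<bar> < real n * t"
        using w unfolding Aset_def by auto
      have "\<bar>\<beta>hat - \<beta>star\<bar> \<le> Cpp * t"
        unfolding bstar Cpp_def
        by (rule good_lemma[OF lohi EB np wa wb t1(2) am[unfolded Femp[of n \<omega>]]])
      also have "Cpp * t = (Cpp * s) * sqrt (L / real n)" by (simp add: t_def)
      also have "\<dots> \<le> C' * sqrt (ln (real n)) * sqrt (L / real n)"
      proof (rule mult_right_mono)
        have "sqrt (ln 2) \<le> sqrt (ln (real n))" using lnn by simp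
        then have "1 \<le> sqrt (ln (real n)) / sqrt (ln 2)" using ln2 by simp
        then have "Cpp * s * 1 \<le> Cpp * s * (sqrt (ln (real n)) / sqrt (ln 2))"
          using Cpp s by (intro mult_left_mono) auto
        then show "Cpp * s \<le> C' * sqrt (ln (real n))" by (simp add: C'_def)
      qed (use L np in simp)
      finally show ?thesis .
    qed
    show "\<exists>A \<in> sets M. measure M A \<ge> 1 - \<delta> \<and>
               (\<forall>\<omega>\<in>A. \<forall>\<beta>hat. is_arg_min
                   (Obj n \<omega>)
                   (\<lambda>\<beta>. \<beta> \<in> {\<beta>min..\<beta>max}) \<beta>hat \<longrightarrow>
                 \<bar>\<beta>hat - \<beta>star\<bar> \<le> C' * sqrt (ln (real n)) * sqrt ((1 + ln (1 / \<delta>)) / real n))"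
    proof (intro bexI[of _ Aset] conjI ballI allI impI)
      show "1 - \<delta> \<le> measure M Aset" by (rule pA)
      show "Aset \<in> sets M" by (rule Aset)
      fix \<omega> \<beta>hat
      assume a1: "\<omega> \<in> Aset" and a2: "is_arg_min
                   (Obj n \<omega>)
                   (\<lambda>\<beta>. \<beta> \<in> {\<beta>min..\<beta>max}) \<beta>hat"
      from good[OF a1 a2] show "\<bar>\<beta>hat - \<beta>star\<bar> \<le> C' * sqrt (ln (real n)) * sqrt ((1 + ln (1 / \<delta>)) / real n)"
        unfolding L_def .
    qed
  qed
  show ?thesis by (intro exI[of _ C] conjI C exI[of _ C'] C' allI main)
qed


lemma inner_sq_bound:
  fixes x y :: "'a::real_inner"
  shows "\<bar>x \<bullet> y\<bar> \<le> (norm x)\<^sup>2 + (norm y)\<^sup>2"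
proof -
  have "\<bar>x \<bullet> y\<bar> \<le> norm x * norm y" by (rule Cauchy_Schwarz_ineq2)
  moreover have "0 \<le> (norm x - norm y)\<^sup>2" by simp
  moreover have "0 \<le> norm x * norm y" by simp
  ultimately show ?thesis by (simp add: power2_eq_square algebra_simps)
qed

lemma norm_diff_scale_sq:
  fixes x g :: "'a::real_inner"
  shows "(norm (x - b *\<^sub>R g))\<^sup>2 = (norm x)\<^sup>2 - 2*b*(x \<bullet> g) + b\<^sup>2*(norm g)\<^sup>2"
  unfolding power2_norm_eq_inner by (simp add: inner_diff_left inner_diff_right inner_commute power2_eq_square algebra_simps)

theorem claim2:
  fixes M :: "'m measure"
    and T :: "'t measure" and Y :: "'y measure"
    and P :: "('t \<times> (real^'d) \<times> 'y) measure"
    and u :: "'t \<Rightarrow> real^'d \<Rightarrow> real"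
    and \<Theta>s :: "nat \<Rightarrow> 'm \<Rightarrow> 't" and X :: "nat \<Rightarrow> 'm \<Rightarrow> real^'d" and Ys :: "nat \<Rightarrow> 'm \<Rightarrow> 'y"
    and \<beta>min \<beta>max \<beta>star :: real
  assumes "prob_space M"
    and "0 < \<beta>min" and "\<beta>min \<le> \<beta>max"
    and diff: "\<And>\<theta> x. \<theta> \<in> space T \<Longrightarrow> u \<theta> differentiable (at x)"
    and grad_meas: "(\<lambda>(\<theta>, x). grad (u \<theta>) x) \<in> borel_measurable (T \<Otimes>\<^sub>M borel)"
    and P_prob: "prob_space P"
    and P_sets: "sets P = sets (T \<Otimes>\<^sub>M borel \<Otimes>\<^sub>M Y)"
    and iid_indep: "prob_space.indep_vars M (\<lambda>_. T \<Otimes>\<^sub>M borel \<Otimes>\<^sub>M Y)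
                      (\<lambda>i \<omega>. (\<Theta>s i \<omega>, X i \<omega>, Ys i \<omega>)) UNIV"
    and iid_law: "\<And>i. distr M (T \<Otimes>\<^sub>M borel \<Otimes>\<^sub>M Y) (\<lambda>\<omega>. (\<Theta>s i \<omega>, X i \<omega>, Ys i \<omega>)) = P"
    and pos: "(\<integral>z. (norm (grad (u (fst z)) (fst (snd z))))\<^sup>2 \<partial>P) > 0"
    and subg_x: "subgaussian_vec P (\<lambda>z. fst (snd z))"
    and subg_g: "subgaussian_vec P (\<lambda>z. grad (u (fst z)) (fst (snd z)))"
    and \<beta>star: "is_arg_min
                 (\<lambda>\<beta>. \<integral>z. (norm (fst (snd z) - \<beta> *\<^sub>R grad (u (fst z)) (fst (snd z))))\<^sup>2 \<partial>P)
                 (\<lambda>\<beta>. \<beta> \<in> {\<beta>min..\<beta>max}) \<beta>star"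
  shows "\<exists>C>0. \<exists>C'>0. \<forall>(n::nat) (\<delta>::real). 0 < \<delta> \<and> \<delta> < 1 \<and>
            real n / ln (real n) \<ge> C * (1 + ln (1 / \<delta>)) \<longrightarrow>
            (\<exists>A \<in> sets M. measure M A \<ge> 1 - \<delta> \<and>
               (\<forall>\<omega>\<in>A. \<forall>\<beta>hat. is_arg_min
                   (\<lambda>\<beta>. (1 / real n) * (\<Sum>i<n. (norm (X i \<omega> - \<beta> *\<^sub>R grad (u (\<Theta>s i \<omega>)) (X i \<omega>)))\<^sup>2))
                   (\<lambda>\<beta>. \<beta> \<in> {\<beta>min..\<beta>max}) \<beta>hat \<longrightarrow>
                 \<bar>\<beta>hat - \<beta>star\<bar> \<le> C' * sqrt (ln (real n)) * sqrt ((1 + ln (1 / \<delta>)) / real n)))"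
proof -
  interpret M: prob_space M by fact
  interpret Pp: prob_space P by (rule P_prob)
  have xm[measurable]: "(\<lambda>z. fst (snd z)) \<in> borel_measurable P"
    using subg_x unfolding subgaussian_vec_def by blast
  have gm[measurable]: "(\<lambda>z. grad (u (fst z)) (fst (snd z))) \<in> borel_measurable P"
    using subg_g unfolding subgaussian_vec_def by blast
  define af where "af z = fst (snd z) \<bullet> grad (u (fst z)) (fst (snd z))" for z :: "'t \<times> (real^'d) \<times> 'y"
  define bf where "bf z = (norm (grad (u (fst z)) (fst (snd z))))\<^sup>2" for z :: "'t \<times> (real^'d) \<times> 'y"
  define qf where "qf z = (norm (fst (snd z)))\<^sup>2" for z :: "'t \<times> (real^'d) \<times> 'y"
  have afm[measurable]: "af \<in> borel_measurable P" unfolding af_def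
    by (intro borel_measurable_inner xm gm)
  have Fxm[measurable]: "(\<lambda>z. (norm (fst (snd z)))\<^sup>2) \<in> borel_measurable P" by measurable
  have Fgm[measurable]: "(\<lambda>z. (norm (grad (u (fst z)) (fst (snd z))))\<^sup>2) \<in> borel_measurable P" by measurable
  have bfm[measurable]: "bf \<in> borel_measurable P" unfolding bf_def by (rule Fgm)
  have qfm[measurable]: "qf \<in> borel_measurable P" unfolding qf_def by (rule Fxm)
  obtain cx where cx: "cx > 0" and ix: "(\<integral>\<^sup>+z. ennreal (exp (cx * (norm (fst (snd z)))\<^sup>2)) \<partial>P) < top"
    using vec_expmom[OF P_prob subg_x] by blast
  obtain cg where cg: "cg > 0"
    and ig: "(\<integral>\<^sup>+z. ennreal (exp (cg * (norm (grad (u (fst z)) (fst (snd z))))\<^sup>2)) \<partial>P) < top"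
    using vec_expmom[OF P_prob subg_g] by blast
  have "\<exists>c>0. (\<integral>\<^sup>+z. ennreal (exp (c * \<bar>af z\<bar>)) \<partial>P) < top"
    by (rule expmom_combine[OF cx cg afm ix ig Fxm Fgm]) (simp_all add: af_def inner_sq_bound)
  then obtain ca where ca: "ca > 0" and ia: "(\<integral>\<^sup>+z. ennreal (exp (ca * \<bar>af z\<bar>)) \<partial>P) < top"
    by blast
  have "\<exists>c>0. (\<integral>\<^sup>+z. ennreal (exp (c * \<bar>bf z\<bar>)) \<partial>P) < top"
    by (rule expmom_combine[OF cg cg bfm ig ig Fgm Fgm]) (simp_all add: bf_def)
  then obtain cb where cb: "cb > 0" and ib: "(\<integral>\<^sup>+z. ennreal (exp (cb * \<bar>bf z\<bar>)) \<partial>P) < top"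
    by blast
  have "\<exists>c>0. (\<integral>\<^sup>+z. ennreal (exp (c * \<bar>qf z\<bar>)) \<partial>P) < top"
    by (rule expmom_combine[OF cx cx qfm ix ix Fxm Fxm]) (simp_all add: qf_def)
  then obtain cq where cq: "cq > 0" and iq: "(\<integral>\<^sup>+z. ennreal (exp (cq * \<bar>qf z\<bar>)) \<partial>P) < top"
    by blast
  define EA where "EA = (\<integral>z. af z \<partial>P)"
  define EB where "EB = (\<integral>z. bf z \<partial>P)"
  define EQ where "EQ = (\<integral>z. qf z \<partial>P)"
  from mgf_bound[OF P_prob afm ca ia] obtain la Ka where intA: "integrable P af" and la: "la > 0" "Ka > 0"
    and mA: "\<And>r. \<bar>r\<bar> \<le> la \<Longrightarrow> (\<integral>\<^sup>+z. ennreal (exp (r*(af z - EA))) \<partial>P) \<le> ennreal (exp (Ka*r\<^sup>2))"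
    unfolding EA_def by blast
  from mgf_bound[OF P_prob bfm cb ib] obtain lb Kb where intB: "integrable P bf" and lb: "lb > 0" "Kb > 0"
    and mB: "\<And>r. \<bar>r\<bar> \<le> lb \<Longrightarrow> (\<integral>\<^sup>+z. ennreal (exp (r*(bf z - EB))) \<partial>P) \<le> ennreal (exp (Kb*r\<^sup>2))"
    unfolding EB_def by blast
  have intQ: "integrable P qf" using mgf_bound[OF P_prob qfm cq iq] by blast
  have EB: "EB > 0" using pos unfolding EB_def bf_def by simp
  have Fobj: "(\<lambda>\<beta>. \<integral>z. (norm (fst (snd z) - \<beta> *\<^sub>R grad (u (fst z)) (fst (snd z))))\<^sup>2 \<partial>P)
      = (\<lambda>\<beta>. EQ - 2*\<beta>*EA + \<beta>\<^sup>2*EB)"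
  proof
    fix \<beta>
    have "(\<integral>z. (norm (fst (snd z) - \<beta> *\<^sub>R grad (u (fst z)) (fst (snd z))))\<^sup>2 \<partial>P)
        = (\<integral>z. qf z - 2*\<beta>*af z + \<beta>\<^sup>2*bf z \<partial>P)"
      by (rule Bochner_Integration.integral_cong[OF refl]) (simp add: norm_diff_scale_sq qf_def af_def bf_def)
    also have "\<dots> = EQ - 2*\<beta>*EA + \<beta>\<^sup>2*EB"
      using intA intB intQ by (simp add: EQ_def EA_def EB_def)
    finally show "(\<integral>z. (norm (fst (snd z) - \<beta> *\<^sub>R grad (u (fst z)) (fst (snd z))))\<^sup>2 \<partial>P)
        = EQ - 2*\<beta>*EA + \<beta>\<^sup>2*EB" .
  qed
  have bstar: "\<beta>star = max \<beta>min (min \<beta>max (EA/EB))"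
    using \<beta>star unfolding Fobj by (rule clip_argmin[OF assms(3) EB])
  define l0 where "l0 = min la lb"
  define K where "K = max Ka Kb"
  have l0: "l0 > 0" using la lb by (simp add: l0_def)
  have K: "K > 0" using la by (simp add: K_def)
  have eK: "ennreal (exp (Ka*r\<^sup>2)) \<le> ennreal (exp (K*r\<^sup>2))" "ennreal (exp (Kb*r\<^sup>2)) \<le> ennreal (exp (K*r\<^sup>2))" for r
    by (auto intro!: ennreal_leI mult_right_mono simp: K_def)
  have mA': "(\<integral>\<^sup>+z. ennreal (exp (r*(af z - EA))) \<partial>P) \<le> ennreal (exp (K*r\<^sup>2))" if "\<bar>r\<bar> \<le> l0" for r
  proof -
    have "\<bar>r\<bar> \<le> la" using that by (simp add: l0_def)
    from mA[OF this] eK(1)[of r] show ?thesis by (rule order.trans)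
  qed
  have mB': "(\<integral>\<^sup>+z. ennreal (exp (r*(bf z - EB))) \<partial>P) \<le> ennreal (exp (K*r\<^sup>2))" if "\<bar>r\<bar> \<le> l0" for r
  proof -
    have "\<bar>r\<bar> \<le> lb" using that by (simp add: l0_def)
    from mB[OF this] eK(2)[of r] show ?thesis by (rule order.trans)
  qed
  define Z where "Z i \<omega> = (\<Theta>s i \<omega>, X i \<omega>, Ys i \<omega>)" for i \<omega>
  have indZ: "M.indep_vars (\<lambda>_. T \<Otimes>\<^sub>M borel \<Otimes>\<^sub>M Y) Z UNIV"
    using iid_indep unfolding Z_def[abs_def] by simp
  have lawZ: "distr M (T \<Otimes>\<^sub>M borel \<Otimes>\<^sub>M Y) (Z i) = P" for i
    using iid_law[of i] unfolding Z_def[abs_def] by simp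
  have Zm[measurable]: "Z i \<in> M \<rightarrow>\<^sub>M (T \<Otimes>\<^sub>M borel \<Otimes>\<^sub>M Y)" for i
    using indZ unfolding M.indep_vars_def by auto
  have PN: "borel_measurable P = (borel_measurable (T \<Otimes>\<^sub>M borel \<Otimes>\<^sub>M Y) :: (_ \<Rightarrow> real) set)"
    by (rule measurable_cong_sets[OF P_sets]) simp
  have afN[measurable]: "af \<in> borel_measurable (T \<Otimes>\<^sub>M borel \<Otimes>\<^sub>M Y)"
    using afm unfolding PN .
  have bfN[measurable]: "bf \<in> borel_measurable (T \<Otimes>\<^sub>M borel \<Otimes>\<^sub>M Y)"
    using bfm unfolding PN .
  have Femp: "(\<lambda>\<beta>. (1 / real n) * (\<Sum>i<n. (norm (X i \<omega> - \<beta> *\<^sub>R grad (u (\<Theta>s i \<omega>)) (X i \<omega>)))\<^sup>2))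
      = (\<lambda>\<beta>. (1/real n) * (\<Sum>i<n. qf (Z i \<omega>) - 2*\<beta>*af (Z i \<omega>) + \<beta>\<^sup>2*bf (Z i \<omega>)))" for n \<omega>
    by (simp add: norm_diff_scale_sq qf_def af_def bf_def Z_def)
  show ?thesis
    by (rule final_step[where Obj="\<lambda>n \<omega> \<beta>. (1 / real n) * (\<Sum>i<n. (norm (X i \<omega> - \<beta> *\<^sub>R grad (u (\<Theta>s i \<omega>)) (X i \<omega>)))\<^sup>2)",
          OF assms(1) indZ lawZ afN bfN mA' mB' l0 K EB assms(3) bstar Femp])
qed

end
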